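(* Let $X$ be a compact metric countable space and $f:X\to X$ a continuous function such that every accumulation point of $X$ is periodic. Let $a$ be an accumulation point of $X$. If there are a sequence $(a_n)_{n\in\mathbb N}$ in $X$ and a periodic point $b\in X\setminus\mathcal O_f(a)$ such that $a_n\to a$ and $b\in\overline{\mathcal O_f(a_n)}$ for every $n\in\mathbb N$, then $f^p$ is discontinuous at $a$ for every $p\in\mathbb N^*$.
   Context: $\mathbb N^*$ denotes the set of free ultrafilters on $\mathbb N$. For $p\in\mathbb N^*$, the $p$-iterate $f^p:X\to X$ is defined by $f^p(x)=p\text{-}\lim_{n\to\infty}f^n(x)$, where $y=p\text{-}\lim x_n$ means $\{n: x_n\in V\}\in p$ for every neighborhood $V$ of $y$. The orbit of $x$ is $\mathcal O_f(x)=\{f^n(x):n\in\mathbb N\}$. A point $x$ is periodic if $f^n(x)=x$ for some $n\ge1$. An accumulation point is a non-isolated point. *)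

theory Defs
  imports "HOL-Analysis.Analysis"
begin

definition ultrafilter :: "nat filter \<Rightarrow> bool" where
  "ultrafilter p \<longleftrightarrow> p \<noteq> bot \<and> (\<forall>P. eventually P p \<or> eventually (\<lambda>n. \<not> P n) p)"

definition free_ultrafilter :: "nat filter \<Rightarrow> bool" where
  "free_ultrafilter p \<longleftrightarrow> ultrafilter p \<and> (\<forall>m. \<not> eventually (\<lambda>n. n = m) p)"

definition p_iterate :: "('a::t2_space \<Rightarrow> 'a) \<Rightarrow> nat filter \<Rightarrow> 'a \<Rightarrow> 'a" where
  "p_iterate f p x = Lim p (\<lambda>n. (f ^^ n) x)"

definition orbit :: "('a \<Rightarrow> 'a) \<Rightarrow> 'a \<Rightarrow> 'a set" where
  "orbit f x = {(f ^^ n) x | n. True}"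

definition periodic_point :: "('a \<Rightarrow> 'a) \<Rightarrow> 'a \<Rightarrow> bool" where
  "periodic_point f x \<longleftrightarrow> (\<exists>n\<ge>1. (f ^^ n) x = x)"

end

theory Submission imports Defs begin

lemma funpow_cont:
  assumes "continuous_on X f" "f ` X \<subseteq> X"
  shows "continuous_on X (f ^^ n) \<and> (f ^^ n) ` X \<subseteq> X"
proof (induction n)
  case 0 then show ?case by (simp add: continuous_on_id)
next
  case (Suc n)
  then have "continuous_on X (f \<circ> (f ^^ n))"
    using assms by (meson continuous_on_compose continuous_on_subset)
  then show ?case using Suc assms by (auto simp: image_subset_iff)
qed

lemma funpow_in: "continuous_on X f \<Longrightarrow> f ` X \<subseteq> X \<Longrightarrow> x \<in> X \<Longrightarrow> (f ^^ n) x \<in> X"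
  using funpow_cont by blast

lemma funpow_comp: "(f ^^ m) ((f ^^ n) x) = (f ^^ (m + n)) x"
  by (simp add: funpow_add)

lemma funpow_Suc_app: "f ((f ^^ n) x) = (f ^^ Suc n) x"
  by simp

lemma periodic_mult: "(f ^^ k) c = c \<Longrightarrow> (f ^^ (k * j)) c = c"
proof (induction j)
  case 0 then show ?case by simp
next
  case (Suc j)
  have "(f ^^ (k * Suc j)) c = (f ^^ k) ((f ^^ (k * j)) c)"
    by (simp add: funpow_comp add.commute)
  then show ?case using Suc by simp
qed

lemma periodic_mod: "(f ^^ k) c = c \<Longrightarrow> (f ^^ t) c = (f ^^ (t mod k)) c"
proof -
  assume h: "(f ^^ k) c = c"
  have "(f ^^ t) c = (f ^^ (t mod k)) ((f ^^ (k * (t div k))) c)"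
    by (simp add: funpow_comp add.commute)
  then show ?thesis using periodic_mult[OF h] by simp
qed

lemma periodic_orbit_finite:
  assumes "periodic_point f c"
  shows "finite (orbit f c)"
proof -
  obtain k where k: "k \<ge> 1" "(f ^^ k) c = c" using assms unfolding periodic_point_def by blast
  have "orbit f c \<subseteq> (\<lambda>t. (f ^^ t) c) ` {..<k}"
    unfolding orbit_def using periodic_mod[OF k(2)] k(1) by fastforce
  then show ?thesis using finite_subset by blast
qed

lemma periodic_back:
  assumes "(f ^^ k) c = c" "k \<ge> 1"
  shows "c = (f ^^ (k * j - j)) ((f ^^ j) c)"
proof -
  have "k * j - j + j = k * j" using assms(2) by (cases k) auto
  then show ?thesis using periodic_mult[OF assms(1), of j] by (simp add: funpow_comp)
qed

lemma periodic_in_orbit_same: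
  assumes "periodic_point f c" "b \<in> orbit f c"
  shows "orbit f c \<subseteq> orbit f b"
proof -
  obtain k where k: "k \<ge> 1" "(f ^^ k) c = c" using assms unfolding periodic_point_def by blast
  obtain j where j: "b = (f ^^ j) c" using assms(2) unfolding orbit_def by blast
  have c: "c = (f ^^ (k * j - j)) b" using periodic_back[OF k(2) k(1)] j by simp
  show ?thesis
  proof
    fix y assume "y \<in> orbit f c"
    then obtain t where "y = (f ^^ t) c" unfolding orbit_def by blast
    then have "y = (f ^^ (t + (k * j - j))) b" using c by (simp add: funpow_comp)
    then show "y \<in> orbit f b" unfolding orbit_def by blast
  qed
qed

lemma free_ge:
  assumes "free_ultrafilter p"
  shows "eventually (\<lambda>n. N \<le> n) p"
proof (induction N)
  case 0 then show ?case by simp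
next
  case (Suc N)
  have "eventually (\<lambda>n. \<not> n = N) p"
    using assms unfolding free_ultrafilter_def ultrafilter_def by blast
  with Suc show ?case by eventually_elim auto
qed

lemma p_iterate_lim:
  fixes X :: "'a::metric_space set"
  assumes "compact X" "continuous_on X f" "f ` X \<subseteq> X" "x \<in> X" "free_ultrafilter p"
  shows "((\<lambda>n. (f ^^ n) x) \<longlongrightarrow> p_iterate f p x) p"
proof -
  let ?g = "\<lambda>n. (f ^^ n) x"
  have pb: "p \<noteq> bot" and uf: "\<And>P. eventually P p \<or> eventually (\<lambda>n. \<not> P n) p"
    using assms(5) unfolding free_ultrafilter_def ultrafilter_def by auto
  let ?F = "filtermap ?g p"
  have "?F \<noteq> bot" using pb by (simp add: filtermap_bot_iff)
  moreover have "eventually (\<lambda>y. y \<in> X) ?F"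
    using funpow_in[OF assms(2,3,4)] by (simp add: eventually_filtermap)
  ultimately obtain l where l: "l \<in> X" "inf (nhds l) ?F \<noteq> bot"
    using assms(1) unfolding compact_filter by blast
  have "(?g \<longlongrightarrow> l) p"
  proof (rule topological_tendstoI)
    fix S assume S: "open S" "l \<in> S"
    show "eventually (\<lambda>n. ?g n \<in> S) p"
    proof (rule ccontr)
      assume "\<not> eventually (\<lambda>n. ?g n \<in> S) p"
      then have "eventually (\<lambda>n. ?g n \<notin> S) p" using uf by blast
      then have e1: "eventually (\<lambda>y. y \<notin> S) ?F" by (simp add: eventually_filtermap)
      have e2: "eventually (\<lambda>y. y \<in> S) (nhds l)" using S by (rule eventually_nhds_in_open)
      have "eventually (\<lambda>y. False) (inf (nhds l) ?F)"
        unfolding eventually_inf using e1 e2 by blast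
      then show False using l(2) by (simp add: eventually_False)
    qed
  qed
  moreover then have "p_iterate f p x = l"
    unfolding p_iterate_def using pb by (simp add: tendsto_Lim)
  ultimately show ?thesis by simp
qed


lemma countable_compact_isolated:
  fixes S :: "'a::metric_space set"
  assumes "compact S" "countable S" "S \<noteq> {}"
  shows "\<exists>c\<in>S. \<exists>e>0. \<forall>z\<in>S. dist z c < e \<longrightarrow> z = c"
proof (rule ccontr)
  assume H: "\<not> ?thesis"
  let ?G = "(\<lambda>z. {z}) ` S"
  have cs: "compact_space (top_of_set S)"
    using assms(1) by (simp add: compact_space_subtopology)
  have "(top_of_set S) interior_of \<Union>?G = {}"
  proof (rule Baire_category_alt)
    show "completely_metrizable_space (top_of_set S) \<or> locally_compact_space (top_of_set S) \<and> regular_space (top_of_set S)"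
      using cs compact_imp_locally_compact_space regular_space_subtopology regular_space_euclidean by blast
    show "countable ?G" using assms(2) by blast
    fix T assume "T \<in> ?G"
    then obtain z where z: "z \<in> S" "T = {z}" by blast
    have "closedin (top_of_set S) {z}" using z by (simp add: closedin_subtopology) (metis closed_singleton inf.absorb_iff2 insert_subset empty_subsetI z(1) Int_commute)
    moreover have "(top_of_set S) interior_of {z} = {}"
    proof (clarsimp simp: interior_of_eq_empty)
      fix U assume U: "openin (top_of_set S) U" "U \<subseteq> {z}"
      show "U = {}"
      proof (rule ccontr)
        assume "U \<noteq> {}"
        with U have "U = {z}" by blast
        with U(1) z(1) H show False by (auto simp: openin_euclidean_subtopology_iff)
      qed
    qed
    ultimately show "closedin (top_of_set S) T \<and> (top_of_set S) interior_of T = {}" using z by simp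
  qed
  moreover have "\<Union>?G = S" by blast
  ultimately show False using assms(3) by (simp add: interior_of_topspace[of "top_of_set S", simplified])
qed

lemma omega_periodic:
  fixes X :: "'a::metric_space set"
  assumes cX: "compact X" and ctX: "countable X" and cf: "continuous_on X f" and fX: "f ` X \<subseteq> X"
    and per: "\<forall>x\<in>X. x islimpt X \<longrightarrow> periodic_point f x"
    and xX: "x \<in> X" and bX: "b \<in> X" and pb: "periodic_point f b" and bc: "b \<in> closure (orbit f x)"
  shows "\<forall>\<epsilon>>0. \<exists>T. \<forall>t\<ge>T. infdist ((f ^^ t) x) (orbit f b) < \<epsilon>"
proof (cases "b \<in> orbit f x")
  case True
  then obtain i where i: "b = (f ^^ i) x" unfolding orbit_def by blast
  have "\<forall>t\<ge>i. infdist ((f ^^ t) x) (orbit f b) = 0"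
  proof (intro allI impI)
    fix t assume "i \<le> t"
    then have "(f ^^ t) x = (f ^^ (t - i)) b" using i by (simp add: funpow_comp)
    moreover have "(f ^^ (t - i)) b \<in> orbit f b" unfolding orbit_def by blast
    ultimately show "infdist ((f ^^ t) x) (orbit f b) = 0" by simp
  qed
  then show ?thesis by (metis less_eq_real_def)
next
  case False
  define Tl where "Tl N = {(f ^^ t) x | t. N \<le> t}" for N
  define W where "W = (\<Inter>N. closure (Tl N))"
  have orbX: "(f ^^ t) x \<in> X" for t using funpow_in[OF cf fX xX] .
  have clX: "closed X" using cX by (rule compact_imp_closed)
  have TlX: "closure (Tl N) \<subseteq> X" for N
    using orbX clX by (intro closure_minimal) (auto simp: Tl_def)
  have WX: "W \<subseteq> X" unfolding W_def using TlX by blast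
  have cW: "compact W"
  proof -
    have "closed W" unfolding W_def by auto
    then have "compact (X \<inter> W)" using cX by auto
    then show ?thesis using WX by (simp add: Int_absorb1)
  qed
  have inj: "i = j" if eqij: "(f ^^ i) x = (f ^^ j) x" for i j
  proof (rule ccontr)
    assume ne: "i \<noteq> j"
    obtain i' j' where ij: "i' < j'" "(f ^^ i') x = (f ^^ j') x"
      using ne eqij by (metis linorder_neqE_nat)
    have all: "\<exists>s<j'. (f ^^ t) x = (f ^^ s) x" for t
    proof (induction t rule: less_induct)
      case (less t)
      show ?case
      proof (cases "t < j'")
        case True then show ?thesis by blast
      next
        case False
        then have "(f ^^ t) x = (f ^^ (t - j')) ((f ^^ j') x)" by (simp add: funpow_comp)
        also have "\<dots> = (f ^^ (t - j')) ((f ^^ i') x)" using ij by simp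
        also have "\<dots> = (f ^^ (t - j' + i')) x" by (simp add: funpow_comp)
        finally show ?thesis using less[of "t - j' + i'"] False ij(1) by auto
      qed
    qed
    have sub: "orbit f x \<subseteq> (\<lambda>s. (f ^^ s) x) ` {..<j'}"
      unfolding orbit_def using all by fastforce
    have "closed ((\<lambda>s. (f ^^ s) x) ` {..<j'})" by (intro finite_imp_closed) auto
    then have "closure (orbit f x) \<subseteq> (\<lambda>s. (f ^^ s) x) ` {..<j'}"
      using sub by (rule closure_minimal[rotated])
    then have "b \<in> orbit f x" using bc unfolding orbit_def by blast
    then show False using False by blast
  qed
  have bW: "b \<in> W"
    unfolding W_def
  proof
    fix N
    have "orbit f x = Tl N \<union> (\<lambda>s. (f ^^ s) x) ` {..<N}"
      unfolding orbit_def Tl_def by (auto simp: not_le)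
    then have "closure (orbit f x) = closure (Tl N) \<union> (\<lambda>s. (f ^^ s) x) ` {..<N}"
      by (simp add: closure_Un closure_closed finite_imp_closed)
    moreover have "b \<notin> (\<lambda>s. (f ^^ s) x) ` {..<N}" using False unfolding orbit_def by blast
    ultimately show "b \<in> closure (Tl N)" using bc by blast
  qed
  have Wper: "periodic_point f y" if yW: "y \<in> W" for y
  proof -
    have "y islimpt X"
      unfolding islimpt_approachable
    proof (intro allI impI)
      fix e :: real assume e: "e > 0"
      obtain N where N: "\<forall>t\<ge>N. (f ^^ t) x \<noteq> y"
      proof (cases "\<exists>t. (f ^^ t) x = y")
        case True
        then obtain t0 where "(f ^^ t0) x = y" by blast
        then have "\<forall>t\<ge>Suc t0. (f ^^ t) x \<noteq> y" using inj by fastforce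
        then show ?thesis using that by blast
      next
        case False then show ?thesis using that by blast
      qed
      have "y \<in> closure (Tl N)" using yW unfolding W_def by blast
      then obtain z where "z \<in> Tl N" "dist z y < e" using e closure_approachable by blast
      then show "\<exists>x'\<in>X. x' \<noteq> y \<and> dist x' y < e" using N orbX unfolding Tl_def by blast
    qed
    then show ?thesis using per yW WX by blast
  qed
  have fW: "f y \<in> W" if "y \<in> W" for y
    unfolding W_def
  proof
    fix N
    have "f ` closure (Tl N) \<subseteq> closure (Tl (Suc N))"
    proof (rule image_closure_subset)
      show "continuous_on (closure (Tl N)) f" using cf TlX by (rule continuous_on_subset)
      show "f ` Tl N \<subseteq> closure (Tl (Suc N))"
      proof -
        have "f ` Tl N \<subseteq> Tl (Suc N)"
        proof
          fix y assume "y \<in> f ` Tl N"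
          then obtain t where "N \<le> t" "y = f ((f ^^ t) x)" unfolding Tl_def by blast
          then have "Suc N \<le> Suc t" "y = (f ^^ Suc t) x" by (simp_all only: funpow_Suc_app Suc_le_mono)
          then show "y \<in> Tl (Suc N)" unfolding Tl_def by blast
        qed
        then show ?thesis using closure_subset by blast
      qed
    qed simp
    moreover have "Tl (Suc N) \<subseteq> Tl N" unfolding Tl_def by auto
    moreover have "y \<in> closure (Tl N)" using that unfolding W_def by blast
    ultimately have "f y \<in> closure (Tl (Suc N))" by blast
    moreover have "closure (Tl (Suc N)) \<subseteq> closure (Tl N)"
      using \<open>Tl (Suc N) \<subseteq> Tl N\<close> by (rule closure_mono)
    ultimately show "f y \<in> closure (Tl N)" by blast
  qed
  have fnW: "(f ^^ n) y \<in> W" if "y \<in> W" for y n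
    using that by (induction n) (auto intro: fW)
  have near: "\<exists>T. \<forall>t\<ge>T. \<exists>w\<in>W. dist ((f ^^ t) x) w < \<eta>" if eta: "\<eta> > 0" for \<eta>
  proof (rule ccontr)
    assume "\<not> ?thesis"
    then have "\<forall>T. \<exists>t\<ge>T. \<forall>w\<in>W. \<eta> \<le> dist ((f ^^ t) x) w" by (auto simp: not_less)
    then obtain g where g: "\<And>T. g T \<ge> T" "\<And>T w. w \<in> W \<Longrightarrow> \<eta> \<le> dist ((f ^^ g T) x) w" by metis
    have "seq_compact X" using cX by (rule compact_imp_seq_compact)
    then obtain l r where l: "l \<in> X" "strict_mono r" "((\<lambda>n. (f ^^ g n) x) \<circ> r) \<longlonglongrightarrow> l"
    proof -
      have "\<forall>n. (f ^^ g n) x \<in> X" using orbX by blast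
      then show ?thesis using that \<open>seq_compact X\<close> unfolding seq_compact_def by metis
    qed
    have "l \<in> W"
      unfolding W_def
    proof
      fix N
      have "eventually (\<lambda>n. ((\<lambda>n. (f ^^ g n) x) \<circ> r) n \<in> Tl N) sequentially"
      proof (rule eventually_sequentiallyI[of N])
        fix n assume "N \<le> n"
        then have "N \<le> g (r n)" using g(1) seq_suble[OF l(2), of n] by (meson le_trans)
        then show "((\<lambda>n. (f ^^ g n) x) \<circ> r) n \<in> Tl N" unfolding Tl_def by auto
      qed
      then have "eventually (\<lambda>n. ((\<lambda>n. (f ^^ g n) x) \<circ> r) n \<in> closure (Tl N)) sequentially"
        by eventually_elim (use closure_subset in blast)
      then show "l \<in> closure (Tl N)" using l(3) by (intro Lim_in_closed_set) auto
    qed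
    then have "\<forall>n. \<eta> \<le> dist (((\<lambda>n. (f ^^ g n) x) \<circ> r) n) l" using g(2) by simp
    moreover have "eventually (\<lambda>n. dist (((\<lambda>n. (f ^^ g n) x) \<circ> r) n) l < \<eta>) sequentially"
      using l(3) eta by (simp add: tendsto_iff)
    ultimately have "eventually (\<lambda>n. False) sequentially"
      by (metis (mono_tags, lifting) eventually_mono not_less)
    then show False by simp
  qed
  obtain c e where c: "c \<in> W" "e > 0" "\<And>z. z \<in> W \<Longrightarrow> dist z c < e \<Longrightarrow> z = c"
    using countable_compact_isolated[OF cW countable_subset[OF WX ctX]] bW by blast
  obtain k where k: "k \<ge> 1" "(f ^^ k) c = c" using Wper[OF c(1)] unfolding periodic_point_def by blast
  define C where "C = orbit f c"
  have CW: "C \<subseteq> W" unfolding C_def orbit_def using fnW c(1) by blast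
  have finC: "finite C" unfolding C_def using Wper[OF c(1)] by (rule periodic_orbit_finite)
  have loc: "\<exists>e'>0. \<forall>z\<in>W. dist z u < e' \<longrightarrow> z \<in> C" if uC: "u \<in> C" for u
  proof -
    obtain j where j: "u = (f ^^ j) c" using uC unfolding C_def orbit_def by blast
    define m where "m = k * j - j"
    have mu: "(f ^^ m) u = c" using periodic_back[OF k(2) k(1), of j] j m_def by simp
    have uX: "u \<in> X" using uC CW WX by blast
    have "continuous_on X (f ^^ m)" using funpow_cont[OF cf fX] by blast
    then obtain d where d: "d > 0" "\<And>z. z \<in> X \<Longrightarrow> dist z u < d \<Longrightarrow> dist ((f ^^ m) z) ((f ^^ m) u) < e"
      unfolding continuous_on_iff using uX c(2) by metis
    have "\<forall>z\<in>W. dist z u < d \<longrightarrow> z \<in> C"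
    proof (intro ballI impI)
      fix z assume zW: "z \<in> W" and dz: "dist z u < d"
      have "(f ^^ m) z = c" using c(3)[OF fnW[OF zW]] d(2)[OF _ dz] zW WX mu by auto
      obtain r where r: "r \<ge> 1" "(f ^^ r) z = z" using Wper[OF zW] unfolding periodic_point_def by blast
      have "z = (f ^^ (r * m)) z" using periodic_mult[OF r(2)] by simp
      also have "\<dots> = (f ^^ (r * m - m)) ((f ^^ m) z)"
      proof -
        have "r * m - m + m = r * m" using r(1) by (cases r) auto
        then show ?thesis by (simp add: funpow_comp)
      qed
      also have "\<dots> = (f ^^ (r * m - m)) c" using \<open>(f ^^ m) z = c\<close> by simp
      finally show "z \<in> C" unfolding C_def orbit_def by blast
    qed
    then show ?thesis using d(1) by blast
  qed
  have "\<exists>d>0. \<forall>u\<in>C. \<forall>z\<in>W. dist z u < d \<longrightarrow> z \<in> C"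
  proof -
    have "\<forall>u\<in>C. eventually (\<lambda>d. \<forall>z\<in>W. dist z u < d \<longrightarrow> z \<in> C) (at_right (0::real))"
    proof
      fix u assume "u \<in> C"
      then obtain e' where e': "e' > 0" "\<forall>z\<in>W. dist z u < e' \<longrightarrow> z \<in> C" using loc by blast
      show "eventually (\<lambda>d. \<forall>z\<in>W. dist z u < d \<longrightarrow> z \<in> C) (at_right (0::real))"
        unfolding eventually_at_right[OF e'(1)] using e' by auto
    qed
    then have "eventually (\<lambda>d. \<forall>u\<in>C. \<forall>z\<in>W. dist z u < d \<longrightarrow> z \<in> C) (at_right (0::real))"
      using finC by (simp add: eventually_ball_finite)
    then obtain b' where b': "b' > 0" "\<forall>y>0. y < b' \<longrightarrow> (\<forall>u\<in>C. \<forall>z\<in>W. dist z u < y \<longrightarrow> z \<in> C)"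
      unfolding eventually_at_right[OF zero_less_one] by auto
    have "b' / 2 > 0" "b' / 2 < b'" using b'(1) by auto
    then show ?thesis using b'(2) by blast
  qed
  then obtain d where d: "d > 0" "\<And>u z. u \<in> C \<Longrightarrow> z \<in> W \<Longrightarrow> dist z u < d \<Longrightarrow> z \<in> C" by blast
  have WC: "W \<subseteq> C"
  proof
    fix e0 assume e0: "e0 \<in> W"
    have "uniformly_continuous_on X f" using cf cX by (rule compact_uniformly_continuous)
    then obtain \<eta>0 where \<eta>0: "\<eta>0 > 0" "\<And>u v. u \<in> X \<Longrightarrow> v \<in> X \<Longrightarrow> dist v u < \<eta>0 \<Longrightarrow> dist (f v) (f u) < d / 2"
      unfolding uniformly_continuous_on_def using d(1) by (metis half_gt_zero)
    define \<eta> where "\<eta> = min \<eta>0 (d / 2)"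
    have eta: "\<eta> > 0" "\<eta> \<le> \<eta>0" "\<eta> \<le> d / 2" using \<eta>0 d unfolding \<eta>_def by auto
    obtain T0 where T0: "\<And>t. t \<ge> T0 \<Longrightarrow> \<exists>w\<in>W. dist ((f ^^ t) x) w < \<eta>" using near[OF eta(1)] by blast
    have "c \<in> closure (Tl T0)" using c(1) unfolding W_def by blast
    then obtain z0 where "z0 \<in> Tl T0" "dist z0 c < \<eta>" using eta(1) closure_approachable by blast
    then obtain t0 where t0: "t0 \<ge> T0" "dist ((f ^^ t0) x) c < \<eta>" unfolding Tl_def by blast
    have inv: "\<exists>w\<in>C. dist ((f ^^ (t0 + s)) x) w < \<eta>" for s
    proof (induction s)
      case 0 then show ?case using t0 unfolding C_def orbit_def by (auto intro: exI[of _ 0])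
    next
      case (Suc s)
      then obtain w where w: "w \<in> C" "dist ((f ^^ (t0 + s)) x) w < \<eta>" by blast
      have wX: "w \<in> X" using w CW WX by blast
      have "dist (f ((f ^^ (t0 + s)) x)) (f w) < d / 2"
        using \<eta>0(2)[OF wX orbX] w(2) eta(2) by simp
      then have dd: "dist ((f ^^ (t0 + Suc s)) x) (f w) < d / 2" by simp
      have fwC: "f w \<in> C"
      proof -
        obtain j where "w = (f ^^ j) c" using w(1) unfolding C_def orbit_def by blast
        then have "f w = (f ^^ Suc j) c" by (simp only: funpow_Suc_app)
        then show ?thesis unfolding C_def orbit_def by blast
      qed
      obtain w' where w': "w' \<in> W" "dist ((f ^^ (t0 + Suc s)) x) w' < \<eta>" using T0[of "t0 + Suc s"] t0(1) by auto
      have "dist w' (f w) \<le> dist w' ((f ^^ (t0 + Suc s)) x) + dist ((f ^^ (t0 + Suc s)) x) (f w)"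
        by (rule dist_triangle)
      then have "dist w' (f w) < d" using dd w'(2) eta(3) by (simp add: dist_commute)
      then have "w' \<in> C" using d(2)[OF fwC w'(1)] by blast
      then show ?case using w'(2) by blast
    qed
    have "e0 \<in> closure (Tl t0)" using e0 unfolding W_def by blast
    then obtain z1 where "z1 \<in> Tl t0" "dist z1 e0 < \<eta>" using eta(1) closure_approachable by blast
    then obtain t where t: "t \<ge> t0" "dist ((f ^^ t) x) e0 < \<eta>" unfolding Tl_def by blast
    obtain w where w: "w \<in> C" "dist ((f ^^ t) x) w < \<eta>" using inv[of "t - t0"] t(1) by auto
    have "dist e0 w \<le> dist e0 ((f ^^ t) x) + dist ((f ^^ t) x) w" by (rule dist_triangle)
    then have "dist e0 w < d" using t(2) w(2) eta(3) by (simp add: dist_commute)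
    then show "e0 \<in> C" using d(2)[OF w(1) e0] by blast
  qed
  have Wb: "W \<subseteq> orbit f b"
  proof -
    have "b \<in> orbit f c" using bW WC unfolding C_def by blast
    then have "orbit f c \<subseteq> orbit f b" by (rule periodic_in_orbit_same[OF Wper[OF c(1)]])
    then show ?thesis using WC unfolding C_def by blast
  qed
  show ?thesis
  proof (intro allI impI)
    fix \<epsilon> :: real assume "\<epsilon> > 0"
    then obtain T where T: "\<And>t. t \<ge> T \<Longrightarrow> \<exists>w\<in>W. dist ((f ^^ t) x) w < \<epsilon>" using near by blast
    have "infdist ((f ^^ t) x) (orbit f b) < \<epsilon>" if tT: "t \<ge> T" for t
    proof -
      obtain w where "w \<in> W" "dist ((f ^^ t) x) w < \<epsilon>" using T[OF tT] by blast
      then show ?thesis using Wb infdist_le[of w "orbit f b" "(f ^^ t) x"] by auto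
    qed
    then show "\<exists>T. \<forall>t\<ge>T. infdist ((f ^^ t) x) (orbit f b) < \<epsilon>" by blast
  qed
qed

theorem theorem3p9:
  fixes X :: "'a::metric_space set" and f :: "'a \<Rightarrow> 'a"
    and a b :: 'a and s :: "nat \<Rightarrow> 'a"
  assumes "compact X" and "countable X"
    and "continuous_on X f" and "f ` X \<subseteq> X"
    and "\<forall>x\<in>X. x islimpt X \<longrightarrow> periodic_point f x"
    and "a \<in> X" and "a islimpt X"
    and "\<forall>n. s n \<in> X" and "s \<longlonglongrightarrow> a"
    and "b \<in> X" and "periodic_point f b" and "b \<notin> orbit f a"
    and "\<forall>n. b \<in> closure (orbit f (s n))"
  shows "\<forall>p. free_ultrafilter p \<longrightarrow> \<not> continuous (at a within X) (p_iterate f p)"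
proof (intro allI impI notI)
  fix p assume fp: "free_ultrafilter p" and cont: "continuous (at a within X) (p_iterate f p)"
  have pb: "p \<noteq> bot" using fp unfolding free_ultrafilter_def ultrafilter_def by blast
  have pa: "periodic_point f a" using assms(5,6,7) by blast
  define A where "A = orbit f a"
  define B where "B = orbit f b"
  have finA: "finite A" unfolding A_def using pa by (rule periodic_orbit_finite)
  have finB: "finite B" unfolding B_def using assms(11) by (rule periodic_orbit_finite)
  have clB: "closed B" using finB by (rule finite_imp_closed)
  have Bne: "B \<noteq> {}" unfolding B_def orbit_def by auto
  have lima: "((\<lambda>n. (f ^^ n) a) \<longlongrightarrow> p_iterate f p a) p"
    using p_iterate_lim[OF assms(1,3,4,6) fp] .
  have paA: "p_iterate f p a \<in> A"
  proof -
    have "eventually (\<lambda>n. (f ^^ n) a \<in> A) p" unfolding A_def orbit_def by (intro always_eventually) blast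
    then show ?thesis using Lim_in_closed_set[OF finite_imp_closed[OF finA] _ pb lima] by blast
  qed
  have paB: "p_iterate f p a \<notin> B"
  proof
    assume "p_iterate f p a \<in> B"
    then have "p_iterate f p a \<in> orbit f b" unfolding B_def .
    then have "orbit f b \<subseteq> orbit f (p_iterate f p a)"
      using periodic_in_orbit_same[OF assms(11)] by blast
    moreover have "b \<in> orbit f b" unfolding orbit_def by (metis (mono_tags, lifting) funpow_0 mem_Collect_eq)
    ultimately have "b \<in> orbit f (p_iterate f p a)" by blast
    moreover have "orbit f (p_iterate f p a) \<subseteq> orbit f a"
      using paA unfolding A_def orbit_def by (auto simp: funpow_comp)
    ultimately show False using assms(12) by blast
  qed
  define \<delta> where "\<delta> = infdist (p_iterate f p a) B"
  have dpos: "\<delta> > 0" unfolding \<delta>_def using infdist_pos_not_in_closed[OF clB Bne paB] .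
  have clS: "closed {y. infdist y B \<le> \<delta> / 2}"
    by (intro closed_Collect_le continuous_on_infdist continuous_on_id continuous_on_const)
  have sn: "infdist (p_iterate f p (s n)) B \<le> \<delta> / 2" for n
  proof -
    have "\<forall>\<epsilon>>0. \<exists>T. \<forall>t\<ge>T. infdist ((f ^^ t) (s n)) B < \<epsilon>"
      unfolding B_def using omega_periodic[OF assms(1-5)] assms(8,10,11,13) by blast
    then obtain T where T: "\<forall>t\<ge>T. infdist ((f ^^ t) (s n)) B < \<delta> / 2" using dpos by (meson half_gt_zero)
    have "eventually (\<lambda>t. (f ^^ t) (s n) \<in> {y. infdist y B \<le> \<delta> / 2}) p"
      using free_ge[OF fp, of T] by eventually_elim (use T in auto)
    then show ?thesis using Lim_in_closed_set[OF clS _ pb p_iterate_lim[OF assms(1,3,4) _ fp]] assms(8) by auto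
  qed
  have lim1: "((\<lambda>n. p_iterate f p (s n)) \<longlongrightarrow> p_iterate f p a) sequentially"
    using continuous_within_tendsto_compose'[OF cont] assms(8,9) by blast
  have ev1: "eventually (\<lambda>n. p_iterate f p (s n) \<in> {y. infdist y B \<le> \<delta> / 2}) sequentially"
    using sn by (intro always_eventually) blast
  have "p_iterate f p a \<in> {y. infdist y B \<le> \<delta> / 2}"
    by (rule Lim_in_closed_set[OF clS ev1 trivial_limit_sequentially lim1])
  then show False using dpos unfolding \<delta>_def by simp
qed

end
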